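(* Let $S=((x_i,y_i))_{i=1}^n$ with $y_i\in\{\pm1\}$, let $h_1,\dots,h_T:\mathcal X\to[-1,1]$, $H=\frac1T\sum_{t=1}^Th_t$, and $\kappa\in[0,1/2]$. Let $(P^\star,\theta_H)=\mathrm{Pythia}(S,H,\kappa)$. Then \[ \sum_{t=1}^TM(P^\star,h_t)\le\frac T2+\frac{T\theta_H}{2}, \] where $M(P,h)=\mathbb{E}_{i\sim P}\big[1-\tfrac12|h(x_i)-y_i|\big]$.
   Context: Pythia$(S,H,\kappa)$: let $B=\{i\in[n]:y_iH(x_i)<0\}$ and $\theta=0$; sort $[n]\setminus B$ by the margin $y_iH(x_i)$; while $|B|<\kappa n$, add to $B$ an element $i$ of $[n]\setminus B$ of minimum margin and set $\theta$ to $y_iH(x_i)$. Output $P^\star$, the uniform distribution on $B$, and $\theta_H=\theta$. *)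

theory Defs
  imports "HOL-Probability.Probability"
begin

text \<open>Sample S = ((x i, y i)) for i < n (0-indexed); the combined hypothesis
  H = (1/T) * sum of h t for t = 1..T.\<close>
definition Hcomb :: "nat \<Rightarrow> (nat \<Rightarrow> 'x \<Rightarrow> real) \<Rightarrow> 'x \<Rightarrow> real" where
  "Hcomb T h z = (\<Sum>t=1..T. h t z) / real T"

inductive pythia_step ::
  "nat \<Rightarrow> (nat \<Rightarrow> 'x) \<Rightarrow> (nat \<Rightarrow> real) \<Rightarrow> ('x \<Rightarrow> real) \<Rightarrow> real
     \<Rightarrow> nat set \<times> real \<Rightarrow> nat set \<times> real \<Rightarrow> bool"
  for n x y H \<kappa> where
  step: "real (card B) < \<kappa> * real n \<Longrightarrow> i \<in> {..<n} - B \<Longrightarrow>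
         (\<forall>j\<in>{..<n} - B. y i * H (x i) \<le> y j * H (x j)) \<Longrightarrow>
         pythia_step n x y H \<kappa> (B, \<theta>) (insert i B, y i * H (x i))"

text \<open>(B, theta) is a possible output of Pythia(S,H,kappa) (ties in the minimum may be broken
  arbitrarily): start from the misclassified set with theta = 0, run the loop until
  card B >= kappa n. The output distribution is the uniform distribution on B.\<close>
definition pythia ::
  "nat \<Rightarrow> (nat \<Rightarrow> 'x) \<Rightarrow> (nat \<Rightarrow> real) \<Rightarrow> ('x \<Rightarrow> real) \<Rightarrow> real \<Rightarrow> nat set \<Rightarrow> real \<Rightarrow> bool" where
  "pythia n x y H \<kappa> B \<theta> \<longleftrightarrow>
     (pythia_step n x y H \<kappa>)\<^sup>*\<^sup>* ({i \<in> {..<n}. y i * H (x i) < 0}, 0) (B, \<theta>)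
     \<and> \<not> (real (card B) < \<kappa> * real n)"

definition Mfun :: "nat pmf \<Rightarrow> ('x \<Rightarrow> real) \<Rightarrow> (nat \<Rightarrow> 'x) \<Rightarrow> (nat \<Rightarrow> real) \<Rightarrow> real" where
  "Mfun P h x y = measure_pmf.expectation P (\<lambda>i. 1 - \<bar>h (x i) - y i\<bar> / 2)"

end

theory Submission
  imports Defs
begin

lemma pythia_inv:
  assumes "(pythia_step n x y H \<kappa>)\<^sup>*\<^sup>* ({i \<in> {..<n}. y i * H (x i) < 0}, 0) s"
  shows "fst s \<subseteq> {..<n} \<and> (\<forall>j\<in>fst s. y j * H (x j) \<le> snd s)
    \<and> (\<forall>j\<in>{..<n} - fst s. snd s \<le> y j * H (x j))"
  using assms
proof (induction rule: rtranclp_induct)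
  case base
  then show ?case by auto
next
  case (step s1 s2)
  from step.hyps(2) show ?case
  proof cases
    case (step B i \<theta>)
    have IH: "B \<subseteq> {..<n}" "\<forall>j\<in>B. y j * H (x j) \<le> \<theta>"
      "\<forall>j\<in>{..<n} - B. \<theta> \<le> y j * H (x j)"
      using step.IH step(1) by auto
    have "i \<in> {..<n}" "i \<notin> B" using step(4) by auto
    have a: "insert i B \<subseteq> {..<n}" using IH(1) \<open>i \<in> {..<n}\<close> by blast
    have t: "\<theta> \<le> y i * H (x i)" using IH(3) step(4) by blast
    have b: "\<forall>j\<in>insert i B. y j * H (x j) \<le> y i * H (x i)"
    proof
      fix j assume "j \<in> insert i B"
      then show "y j * H (x j) \<le> y i * H (x i)"
      proof
        assume "j \<in> B" then show ?thesis using IH(2) t by fastforce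
      qed simp
    qed
    have c: "\<forall>j\<in>{..<n} - insert i B. y i * H (x i) \<le> y j * H (x j)"
      using step(5) by blast
    show ?thesis using a b c step(2) by simp
  qed
qed

lemma term_eq:
  fixes yv hv :: real
  assumes "yv \<in> {-1, 1}" "hv \<in> {-1..1}"
  shows "1 - \<bar>hv - yv\<bar> / 2 = (1 + yv * hv) / 2"
proof -
  have "yv = -1 \<or> yv = 1" using assms(1) by simp
  moreover have "-1 \<le> hv" "hv \<le> 1" using assms(2) by simp_all
  ultimately show ?thesis
  proof (elim disjE)
    assume "yv = -1"
    moreover have "\<bar>hv - (-1)\<bar> = hv + 1" using \<open>-1 \<le> hv\<close> by linarith
    ultimately show ?thesis by (simp add: field_simps)
  next
    assume "yv = 1"
    moreover have "\<bar>hv - 1\<bar> = 1 - hv" using \<open>hv \<le> 1\<close> by linarith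
    ultimately show ?thesis by (simp add: field_simps)
  qed
qed

theorem mainTheorem11:
  fixes n T :: nat and x :: "nat \<Rightarrow> 'x" and y :: "nat \<Rightarrow> real"
    and h :: "nat \<Rightarrow> 'x \<Rightarrow> real" and \<kappa> \<theta> :: real and B :: "nat set"
  assumes "\<forall>i<n. y i \<in> {-1, 1}"
    and "\<forall>t\<in>{1..T}. \<forall>z. h t z \<in> {-1..1}"
    and "T \<ge> 1"
    and "0 \<le> \<kappa>" and "\<kappa> \<le> 1/2"
    and "pythia n x y (Hcomb T h) \<kappa> B \<theta>"
    and "B \<noteq> {}"
  shows "(\<Sum>t=1..T. Mfun (pmf_of_set B) (h t) x y) \<le> real T / 2 + real T * \<theta> / 2"
proof -
  have inv: "B \<subseteq> {..<n}" "\<forall>j\<in>B. y j * Hcomb T h (x j) \<le> \<theta>"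
    using pythia_inv[of n x y "Hcomb T h" \<kappa> "(B, \<theta>)"] assms(6)
    unfolding pythia_def by auto
  have fin: "finite B" using inv(1) finite_subset by blast
  define f where "f t i = 1 - \<bar>h t (x i) - y i\<bar> / 2" for t i
  have M: "Mfun (pmf_of_set B) (h t) x y = (\<Sum>i\<in>B. f t i) / card B" for t
    unfolding Mfun_def f_def using fin assms(7) by (simp add: integral_pmf_of_set)
  have rowsum: "(\<Sum>t=1..T. f t i) \<le> real T / 2 + real T * \<theta> / 2" if "i \<in> B" for i
  proof -
    have yi: "y i \<in> {-1,1}" using that inv(1) assms(1) by auto
    have "(\<Sum>t=1..T. f t i) = (\<Sum>t=1..T. (1 + y i * h t (x i)) / 2)"
      unfolding f_def using term_eq[OF yi] assms(2) by (intro sum.cong) auto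
    also have "\<dots> = real T / 2 + y i * (\<Sum>t=1..T. h t (x i)) / 2"
      by (simp add: sum_divide_distrib[symmetric] sum.distrib sum_distrib_left add_divide_distrib)
    also have "(\<Sum>t=1..T. h t (x i)) = real T * Hcomb T h (x i)"
      unfolding Hcomb_def using assms(3) by simp
    also have "real T / 2 + y i * (real T * Hcomb T h (x i)) / 2
        = real T / 2 + real T * (y i * Hcomb T h (x i)) / 2" by simp
    also have "\<dots> \<le> real T / 2 + real T * \<theta> / 2"
      using inv(2) that by (intro add_left_mono divide_right_mono mult_left_mono) auto
    finally show ?thesis .
  qed
  have cpos: "real (card B) > 0" using fin assms(7) by (simp add: card_gt_0_iff)
  have "(\<Sum>t=1..T. Mfun (pmf_of_set B) (h t) x y) = (\<Sum>i\<in>B. \<Sum>t=1..T. f t i) / card B"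
    unfolding M by (simp add: sum_divide_distrib[symmetric] sum.swap[of _ B])
  also have "\<dots> \<le> (\<Sum>i\<in>B. real T / 2 + real T * \<theta> / 2) / card B"
    using rowsum cpos by (intro divide_right_mono sum_mono) auto
  also have "\<dots> = real T / 2 + real T * \<theta> / 2" using cpos by simp
  finally show ?thesis .
qed

end
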